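(* Let $\boldsymbol{S}$ be a $p\times p$ symmetric positive semidefinite matrix that is nonsingular, let $\rho>0$, $k$ an integer with $0\le k\le\binom p2$, $\mathcal{C}=\{\boldsymbol{A}\in\mathbb{R}^{p\times p}:\boldsymbol{A}=\boldsymbol{A}^T,\ \|\boldsymbol{A}\|_0\le 2k+p\}$, and for positive definite $\boldsymbol{\Sigma}$ let $h_\rho(\boldsymbol{\Sigma})=\ln\det\boldsymbol{\Sigma}+\mathrm{tr}(\boldsymbol{\Sigma}^{-1}\boldsymbol{S})+\frac\rho2\mathrm{dist}(\boldsymbol{\Sigma},\mathcal{C})^2$. Then $h_\rho$ is coercive on the positive definite cone: $h_\rho(\boldsymbol{\Sigma})\to\infty$ whenever $\boldsymbol{\Sigma}$ ranges over positive definite matrices with $\|\boldsymbol{\Sigma}\|\to\infty$ or $\|\boldsymbol{\Sigma}^{-1}\|\to\infty$.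
   Context: $\|\boldsymbol{A}\|_0$ is the number of nonzero entries of $\boldsymbol{A}$; $\mathrm{dist}$ is Frobenius distance to the set $\mathcal{C}$. *)

theory Defs
  imports "HOL-Analysis.Analysis"
begin

definition psd_mat :: "real^'n^'n \<Rightarrow> bool" where
  "psd_mat A \<longleftrightarrow> transpose A = A \<and> (\<forall>x. 0 \<le> x \<bullet> (A *v x))"

definition pd_mat :: "real^'n^'n \<Rightarrow> bool" where
  "pd_mat A \<longleftrightarrow> transpose A = A \<and> (\<forall>x. x \<noteq> 0 \<longrightarrow> 0 < x \<bullet> (A *v x))"

definition nnz :: "real^'n^'n \<Rightarrow> nat" where
  "nnz A = card {(i, j). A $ i $ j \<noteq> 0}"

definition sparse_sym_set :: "nat \<Rightarrow> (real^'n^'n) set" where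
  "sparse_sym_set k = {A. transpose A = A \<and> nnz A \<le> 2 * k + CARD('n)}"

text \<open>The penalized objective h_rho; dist is the Frobenius distance (the norm on real^'n^'n).\<close>
definition h_rho :: "real^'n^'n \<Rightarrow> nat \<Rightarrow> real \<Rightarrow> real^'n^'n \<Rightarrow> real" where
  "h_rho S k \<rho> \<Sigma> = ln (det \<Sigma>) + trace (matrix_inv \<Sigma> ** S)
      + \<rho> / 2 * (infdist \<Sigma> (sparse_sym_set k))\<^sup>2"

end

theory Submission
  imports Defs
begin

lemma sym_inner:
  fixes A :: "real^'n^'n"
  assumes "transpose A = A"
  shows "x \<bullet> (A *v y) = (A *v x) \<bullet> y"
  by (metis assms dot_lmul_matrix transpose_matrix_vector)

lemma quad_zero:
  fixes b c :: real
  assumes "\<And>t. 2*t*b + t^2*c \<le> 0"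
  shows "b = 0"
proof (rule ccontr)
  assume "b \<noteq> 0"
  define t where "t = b / (\<bar>c\<bar> + 1)"
  have p: "\<bar>c\<bar> + 1 > 0" by simp
  have "2*t*b = 2*b^2/(\<bar>c\<bar>+1)" by (simp add: t_def power2_eq_square)
  moreover have "t^2*c \<ge> - (b^2/(\<bar>c\<bar>+1))"
  proof -
    have "t^2*c \<ge> - (t^2*\<bar>c\<bar>)" using mult_left_mono[of "-\<bar>c\<bar>" c "t^2"] by simp
    moreover have "t^2*\<bar>c\<bar> = b^2*\<bar>c\<bar>/(\<bar>c\<bar>+1)^2" by (simp add: t_def power_divide)
    moreover have "b^2*\<bar>c\<bar>/(\<bar>c\<bar>+1)^2 \<le> b^2/(\<bar>c\<bar>+1)"
    proof -
      have e: "b^2*\<bar>c\<bar>/(\<bar>c\<bar>+1)^2 = (b^2/(\<bar>c\<bar>+1)) * (\<bar>c\<bar>/(\<bar>c\<bar>+1))"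
        by (simp add: power2_eq_square)
      have "\<bar>c\<bar>/(\<bar>c\<bar>+1) \<le> 1" using p by simp
      hence "(b^2/(\<bar>c\<bar>+1)) * (\<bar>c\<bar>/(\<bar>c\<bar>+1)) \<le> (b^2/(\<bar>c\<bar>+1)) * 1"
        by (intro mult_left_mono) auto
      thus ?thesis unfolding e by simp
    qed
    ultimately show ?thesis by linarith
  qed
  moreover have "b^2/(\<bar>c\<bar>+1) > 0" using \<open>b \<noteq> 0\<close> p by simp
  ultimately have "2*t*b + t^2*c > 0" by linarith
  with assms[of t] show False by linarith
qed

lemma eigvec_exists:
  fixes A :: "real^'n^'n"
  assumes sym: "transpose A = A" and W: "subspace W" and ne: "w \<in> W" "w \<noteq> 0"
    and inv: "\<And>x. x \<in> W \<Longrightarrow> A *v x \<in> W"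
  shows "\<exists>x\<in>W. norm x = 1 \<and> A *v x = (x \<bullet> (A *v x)) *\<^sub>R x"
proof -
  let ?K = "W \<inter> sphere 0 1"
  have cK: "compact ?K" by (metis closed_Int_compact closed_subspace[OF W] compact_sphere)
  have "w /\<^sub>R norm w \<in> ?K" using ne W by (simp add: subspace_scale)
  hence neK: "?K \<noteq> {}" by blast
  have cont: "continuous_on ?K (\<lambda>x. x \<bullet> (A *v x))"
    by (intro continuous_intros linear_continuous_on matrix_vector_mul_bounded_linear)
  obtain x where xK: "x \<in> ?K" and xmax: "\<And>y. y \<in> ?K \<Longrightarrow> y \<bullet> (A *v y) \<le> x \<bullet> (A *v x)"
    using continuous_attains_sup[OF cK neK cont] by blast
  define q where "q = x \<bullet> (A *v x)"
  have xW: "x \<in> W" and nx: "norm x = 1" using xK by auto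
  have xx: "x \<bullet> x = 1" using nx by (simp add: dot_square_norm)
  have orth: "y \<bullet> (A *v x) = 0" if yW: "y \<in> W" and yx: "y \<bullet> x = 0" for y
  proof -
    have "2*t*(y \<bullet> (A *v x)) + t^2*(y \<bullet> (A *v y) - q * (y \<bullet> y)) \<le> 0" for t
    proof -
      define z where "z = x + t *\<^sub>R y"
      have zW: "z \<in> W" using xW yW W by (simp add: z_def subspace_add subspace_scale)
      have zz: "z \<bullet> z = 1 + t^2 * (y \<bullet> y)"
        using xx yx by (simp add: z_def algebra_simps inner_commute power2_eq_square)
      have zpos: "z \<bullet> z > 0" using zz by (simp add: add_pos_nonneg)
      have nz: "norm z ^2 = z \<bullet> z" by (simp add: dot_square_norm)
      have "(z /\<^sub>R norm z) \<in> ?K" using zW W zpos by (auto simp: subspace_scale)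
      hence "(z /\<^sub>R norm z) \<bullet> (A *v (z /\<^sub>R norm z)) \<le> q" using xmax q_def by blast
      hence "(z \<bullet> (A *v z)) / (norm z)^2 \<le> q"
        by (simp add: matrix_vector_mult_scaleR power2_eq_square divide_inverse mult.commute mult.left_commute)
      hence "z \<bullet> (A *v z) \<le> q * (z \<bullet> z)" using zpos nz by (simp add: divide_le_eq)
      moreover have "z \<bullet> (A *v z) = q + 2*t*(y \<bullet> (A *v x)) + t^2*(y \<bullet> (A *v y))"
        using sym_inner[OF sym, of x y]
        by (simp add: z_def q_def matrix_vector_right_distrib matrix_vector_mult_scaleR algebra_simps inner_commute power2_eq_square)
      ultimately show ?thesis using zz by (simp add: algebra_simps)
    qed
    thus ?thesis using quad_zero by blast
  qed
  define r where "r = A *v x - q *\<^sub>R x"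
  have rW: "r \<in> W" using inv[OF xW] xW W by (simp add: r_def subspace_diff subspace_scale)
  have rx: "r \<bullet> x = 0" using xx by (simp add: r_def q_def inner_commute algebra_simps)
  have "r \<bullet> r = r \<bullet> (A *v x) - q * (r \<bullet> x)" by (simp add: r_def algebra_simps)
  also have "\<dots> = 0" using orth[OF rW rx] rx by simp
  finally have "r = 0" by simp
  thus ?thesis using xW nx by (auto simp: r_def q_def)
qed

lemma spectral:
  fixes A :: "real^'n^'n"
  assumes sym: "transpose A = A"
  shows "\<exists>v::'n \<Rightarrow> real^'n. \<exists>d. (\<forall>i j. v i \<bullet> v j = (if i = j then 1 else 0)) \<and> (\<forall>i. A *v v i = d i *\<^sub>R v i)"
proof -
  define good where "good B \<longleftrightarrow> (\<forall>b\<in>B. norm b = 1 \<and> A *v b = (b \<bullet> (A *v b)) *\<^sub>R b) \<and> pairwise orthogonal B" for B :: "(real^'n) set"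
  have gi: "independent B \<and> finite B \<and> card B \<le> CARD('n)" if "good B" for B
  proof -
    have "0 \<notin> B" using that by (auto simp: good_def)
    hence "independent B" using that pairwise_orthogonal_independent by (auto simp: good_def)
    thus ?thesis using independent_bound[of B] by simp
  qed
  have "good {}" by (simp add: good_def)
  obtain m where m: "\<exists>B. good B \<and> card B = m" and mmax: "\<And>m'. (\<exists>B. good B \<and> card B = m') \<Longrightarrow> m' \<le> m"
  proof -
    have "\<exists>B. good B \<and> card B = 0" using \<open>good {}\<close> by (intro exI[of _ "{}"]) simp
    moreover have "\<forall>y. (\<exists>B. good B \<and> card B = y) \<longrightarrow> y \<le> CARD('n)" using gi by blast
    ultimately show ?thesis using that Nat.ex_has_greatest_nat[of "\<lambda>m. \<exists>B. good B \<and> card B = m" 0 "CARD('n)"] by blast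
  qed
  obtain B where gB: "good B" and cB: "card B = m" using m by blast
  have indB: "independent B" and fB: "finite B" using gi[OF gB] by auto
  have full: "card B = CARD('n)"
  proof (rule ccontr)
    assume "card B \<noteq> CARD('n)"
    hence "card B < CARD('n)" using gi[OF gB] by simp
    hence "dim B < DIM(real^'n)" using dim_eq_card_independent[OF indB] by simp
    then obtain x where x0: "x \<noteq> 0" and xo: "\<And>y. y \<in> span B \<Longrightarrow> orthogonal x y"
      using orthogonal_to_subspace_exists by blast
    define W where "W = {y. \<forall>b\<in>B. orthogonal b y}"
    have W: "subspace W" unfolding W_def by (rule subspace_orthogonal_to_vectors)
    have xW: "x \<in> W" using xo span_base by (auto simp: W_def orthogonal_commute)
    have inv: "A *v y \<in> W" if "y \<in> W" for y
    proof -
      have "orthogonal b (A *v y)" if "b \<in> B" for b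
      proof -
        have "b \<bullet> (A *v y) = (A *v b) \<bullet> y" by (rule sym_inner[OF sym])
        also have "\<dots> = (b \<bullet> (A *v b)) * (b \<bullet> y)" using gB \<open>b \<in> B\<close> by (metis good_def inner_scaleR_left)
        also have "\<dots> = 0" using \<open>y \<in> W\<close> \<open>b \<in> B\<close> by (simp add: W_def orthogonal_def)
        finally show ?thesis by (simp add: orthogonal_def)
      qed
      thus ?thesis by (simp add: W_def)
    qed
    obtain u where uW: "u \<in> W" and nu: "norm u = 1" and eu: "A *v u = (u \<bullet> (A *v u)) *\<^sub>R u"
      using eigvec_exists[OF sym W xW x0 inv] by blast
    have uB: "u \<notin> B"
    proof
      assume "u \<in> B"
      hence "u \<bullet> u = 0" using uW by (simp add: W_def orthogonal_def)
      thus False using nu by simp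
    qed
    have "good (insert u B)"
      using gB uW nu eu by (auto simp: good_def pairwise_insert W_def orthogonal_commute)
    moreover have "card (insert u B) = m + 1" using fB uB cB by simp
    ultimately have "m + 1 \<le> m" using mmax by blast
    thus False by simp
  qed
  obtain f where f: "bij_betw f (UNIV::'n set) B"
    using finite_same_card_bij[of "UNIV::'n set" B] fB full by auto
  have fB': "f i \<in> B" for i using f by (auto simp: bij_betw_def)
  have "f i \<bullet> f j = (if i = j then 1 else 0)" for i j
  proof (cases "i = j")
    case True
    thus ?thesis using gB fB'[of i] by (simp add: good_def dot_square_norm)
  next
    case False
    hence "f i \<noteq> f j" using f by (auto simp: bij_betw_def inj_on_def)
    thus ?thesis using gB fB'[of i] fB'[of j] False by (auto simp: good_def pairwise_def orthogonal_def)
  qed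
  moreover have "A *v f i = (f i \<bullet> (A *v f i)) *\<^sub>R f i" for i using gB fB'[of i] by (simp add: good_def)
  ultimately show ?thesis by (intro exI[of _ f] exI[of _ "\<lambda>i. f i \<bullet> (A *v f i)"]) blast
qed

definition colmat :: "('n \<Rightarrow> real^'n) \<Rightarrow> real^'n^'n" where
  "colmat v = (\<chi> i j. v j $ i)"

lemma colmat_orth:
  fixes v :: "'n \<Rightarrow> real^'n"
  assumes orth: "\<And>i j. v i \<bullet> v j = (if i = j then 1 else 0)"
  shows "transpose (colmat v) ** colmat v = mat 1" "colmat v ** transpose (colmat v) = mat 1"
proof -
  show 1: "transpose (colmat v) ** colmat v = mat 1"
    using orth by (simp add: vec_eq_iff matrix_matrix_mult_def colmat_def transpose_def mat_def inner_vec_def)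
  thus "colmat v ** transpose (colmat v) = mat 1" using matrix_left_right_inverse by blast
qed

lemma mult_colmat: "(X ** colmat v) $ k $ i = (X *v v i) $ k"
  by (simp add: matrix_matrix_mult_def matrix_vector_mult_def colmat_def)

lemma trace_basis:
  fixes X :: "real^'n^'n" and v :: "'n \<Rightarrow> real^'n"
  assumes orth: "\<And>i j. v i \<bullet> v j = (if i = j then 1 else 0)"
  shows "trace X = (\<Sum>i\<in>UNIV. v i \<bullet> (X *v v i))"
proof -
  let ?P = "colmat v"
  have "trace X = trace (X ** (?P ** transpose ?P))" using colmat_orth[OF orth] by simp
  also have "\<dots> = trace ((X ** ?P) ** transpose ?P)" by (simp add: matrix_mul_assoc)
  also have "\<dots> = trace (transpose ?P ** (X ** ?P))" by (rule trace_mul_sym)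
  also have "\<dots> = (\<Sum>i\<in>UNIV. v i \<bullet> (X *v v i))"
    unfolding trace_def
    by (simp add: matrix_matrix_mult_def transpose_def colmat_def inner_vec_def matrix_vector_mult_def)
  finally show ?thesis .
qed

lemma norm_sq_trace:
  fixes X :: "real^'n^'n"
  shows "(norm X)^2 = trace (transpose X ** X)"
proof -
  have "(norm X)^2 = X \<bullet> X" by (simp add: dot_square_norm)
  also have "\<dots> = (\<Sum>k\<in>UNIV. \<Sum>j\<in>UNIV. X$k$j * X$k$j)" by (simp add: inner_vec_def)
  also have "\<dots> = (\<Sum>j\<in>UNIV. \<Sum>k\<in>UNIV. X$k$j * X$k$j)" by (rule sum.swap)
  also have "\<dots> = trace (transpose X ** X)"
    by (simp add: trace_def matrix_matrix_mult_def transpose_def)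
  finally show ?thesis .
qed

lemma norm_sq_basis:
  fixes X :: "real^'n^'n" and v :: "'n \<Rightarrow> real^'n"
  assumes orth: "\<And>i j. v i \<bullet> v j = (if i = j then 1 else 0)"
  shows "(norm X)^2 = (\<Sum>i\<in>UNIV. (norm (X *v v i))^2)"
proof -
  have "(norm X)^2 = (\<Sum>i\<in>UNIV. v i \<bullet> ((transpose X ** X) *v v i))"
    using norm_sq_trace trace_basis[OF orth] by metis
  also have "\<dots> = (\<Sum>i\<in>UNIV. (norm (X *v v i))^2)"
  proof (rule sum.cong)
    fix i
    have "v i \<bullet> ((transpose X ** X) *v v i) = v i \<bullet> (transpose X *v (X *v v i))"
      by (simp add: matrix_vector_mul_assoc)
    also have "\<dots> = (v i v* transpose X) \<bullet> (X *v v i)" by (rule dot_lmul_matrix[symmetric])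
    also have "\<dots> = (X *v v i) \<bullet> (X *v v i)" by (metis transpose_matrix_vector transpose_transpose)
    finally show "v i \<bullet> ((transpose X ** X) *v v i) = (norm (X *v v i))^2" by (simp add: dot_square_norm)
  qed simp
  finally show ?thesis .
qed

lemma det_basis:
  fixes A :: "real^'n^'n" and v :: "'n \<Rightarrow> real^'n"
  assumes orth: "\<And>i j. v i \<bullet> v j = (if i = j then 1 else 0)"
    and ev: "\<And>i. A *v v i = d i *\<^sub>R v i"
  shows "det A = (\<Prod>i\<in>UNIV. d i)"
proof -
  let ?P = "colmat v"
  define D :: "real^'n^'n" where "D = (\<chi> i j. if i = j then d i else 0)"
  have "A ** ?P = ?P ** D"
  proof -
    have "(A ** ?P) $ k $ i = (?P ** D) $ k $ i" for k i
    proof -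
      have "(?P ** D) $ k $ i = (\<Sum>m\<in>UNIV. v m $ k * (if m = i then d i else 0))"
        by (auto simp: matrix_matrix_mult_def colmat_def D_def intro!: sum.cong)
      also have "\<dots> = (\<Sum>m\<in>UNIV. (if m = i then v i $ k * d i else 0))"
        by (rule sum.cong) auto
      also have "\<dots> = v i $ k * d i" by simp
      finally show ?thesis by (simp add: mult_colmat ev)
    qed
    thus ?thesis by (simp add: vec_eq_iff)
  qed
  hence "det A * det ?P = det ?P * det D" by (metis det_mul)
  moreover have "det ?P \<noteq> 0"
  proof -
    have "det (transpose ?P) * det ?P = 1" using colmat_orth[OF orth] by (metis det_I det_mul)
    thus ?thesis by auto
  qed
  moreover have "det D = (\<Prod>i\<in>UNIV. d i)" by (subst det_diagonal) (auto simp: D_def)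
  ultimately show ?thesis by simp
qed

lemma matrix_inv_props:
  fixes A :: "real^'n^'n"
  assumes "invertible A"
  shows "matrix_inv A ** A = mat 1" "A ** matrix_inv A = mat 1"
proof -
  have "\<exists>A'. A ** A' = mat 1 \<and> A' ** A = mat 1" using assms by (simp add: invertible_def)
  hence "A ** matrix_inv A = mat 1 \<and> matrix_inv A ** A = mat 1"
    unfolding matrix_inv_def by (rule someI_ex)
  thus "matrix_inv A ** A = mat 1" "A ** matrix_inv A = mat 1" by auto
qed

lemma S_lower:
  fixes S :: "real^'n^'n"
  assumes psd: "psd_mat S" and inv: "invertible S"
  shows "\<exists>s>0. \<forall>x. norm x = 1 \<longrightarrow> s \<le> x \<bullet> (S *v x)"
proof -
  have sym: "transpose S = S" and nn: "\<And>x. 0 \<le> x \<bullet> (S *v x)" using psd by (auto simp: psd_mat_def)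
  obtain i :: 'n where True by blast
  have ne: "sphere (0::real^'n) 1 \<noteq> {}" using norm_axis_1[of i] by (metis mem_sphere_0 empty_iff)
  have cont: "continuous_on (sphere 0 1) (\<lambda>x::real^'n. x \<bullet> (S *v x))"
    by (intro continuous_intros linear_continuous_on matrix_vector_mul_bounded_linear)
  obtain u where uS: "u \<in> sphere (0::real^'n) 1" and umin: "\<And>y. y \<in> sphere 0 1 \<Longrightarrow> u \<bullet> (S *v u) \<le> y \<bullet> (S *v y)"
    using continuous_attains_inf[OF compact_sphere ne cont] by blast
  have pos: "u \<bullet> (S *v u) > 0"
  proof (rule ccontr)
    assume "\<not> u \<bullet> (S *v u) > 0"
    hence u0: "u \<bullet> (S *v u) = 0" using nn[of u] by simp
    have "y \<bullet> (S *v u) = 0" for y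
    proof -
      have "2*t*(-(y \<bullet> (S *v u))) + t^2*(-(y \<bullet> (S *v y))) \<le> 0" for t
      proof -
        have "0 \<le> (u + t *\<^sub>R y) \<bullet> (S *v (u + t *\<^sub>R y))" by (rule nn)
        also have "\<dots> = 2*t*(y \<bullet> (S *v u)) + t^2*(y \<bullet> (S *v y))"
          using sym_inner[OF sym, of u y] u0
          by (simp add: matrix_vector_right_distrib matrix_vector_mult_scaleR algebra_simps inner_commute power2_eq_square)
        finally show ?thesis by simp
      qed
      from quad_zero[OF this] show ?thesis by simp
    qed
    hence "(S *v u) \<bullet> (S *v u) = 0" by blast
    hence "S *v u = 0" by simp
    hence "u = 0" using inj_matrix_vector_mult[OF inv] by (metis injD matrix_vector_mult_0_right)
    thus False using uS by simp
  qed
  show ?thesis using pos umin by (intro exI[of _ "u \<bullet> (S *v u)"]) auto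
qed

lemma g_bounds:
  fixes s x :: real
  assumes "s > 0" "x > 0"
  shows "ln x + s/x \<ge> ln x" "ln x + s/x \<ge> (s/2)/x + ln (s/2)"
proof -
  show "ln x + s/x \<ge> ln x" using assms by simp
  have "ln (s/(2*x)) \<le> s/(2*x) - 1" using assms by (intro ln_le_minus_one) simp
  moreover have "ln (s/(2*x)) = ln (s/2) - ln x" using assms by (simp add: ln_div ln_mult)
  ultimately show "ln x + s/x \<ge> (s/2)/x + ln (s/2)" by (simp add: field_simps)
qed

lemma exists_big:
  fixes X :: "real^'n^'n" and T :: real and a :: "'n \<Rightarrow> real"
  assumes "(norm X)^2 = (\<Sum>i\<in>UNIV. (a i)^2)" "\<And>i. a i \<ge> 0" "T \<ge> 0" "norm X > CARD('n) * T"
  shows "\<exists>j. a j > T"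
proof (rule ccontr)
  assume "\<not> ?thesis"
  hence aT: "a i \<le> T" for i by (meson not_le)
  have sq: "(a i)^2 \<le> T^2" for i by (rule power_mono[OF aT assms(2)])
  have "(\<Sum>i\<in>UNIV. (a i)^2) \<le> (\<Sum>i\<in>(UNIV::'n set). T^2)" using sum_mono[of "UNIV::'n set" "\<lambda>i. (a i)^2" "\<lambda>i. T^2"] sq by simp
  also have "\<dots> = real CARD('n) * T^2" by simp
  also have "\<dots> \<le> (real CARD('n) * T)^2"
  proof -
    have "real CARD('n) \<le> (real CARD('n))^2" by (simp add: power2_eq_square)
    hence "real CARD('n) * T^2 \<le> (real CARD('n))^2 * T^2" by (rule mult_right_mono) simp
    thus ?thesis by (simp only: power_mult_distrib)
  qed
  finally have "(norm X)^2 \<le> (real CARD('n) * T)^2" using assms(1) by simp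
  hence "norm X \<le> real CARD('n) * T" using assms(3) by (metis power2_le_imp_le mult_nonneg_nonneg of_nat_0_le_iff)
  thus False using assms(4) by simp
qed

theorem lemma1:
  fixes S :: "real^'n^'n" and \<rho> :: real and k :: nat
  assumes "psd_mat S" and "invertible S" and "\<rho> > 0"
    and "k \<le> CARD('n) choose 2"
  shows "\<forall>M. \<exists>R. \<forall>\<Sigma>::real^'n^'n. pd_mat \<Sigma> \<and> (norm \<Sigma> > R \<or> norm (matrix_inv \<Sigma>) > R)
             \<longrightarrow> h_rho S k \<rho> \<Sigma> > M"
proof (intro allI)
  fix M :: real
  obtain s where s0: "s > 0" and sl: "\<And>x. norm x = 1 \<Longrightarrow> s \<le> x \<bullet> (S *v x)"
    using S_lower[OF assms(1,2)] by blast
  define n where "n = real CARD('n)"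
  define c0 where "c0 = ln (s/2)"
  define K where "K = \<bar>M\<bar> + n * \<bar>c0\<bar> + 1"
  define T where "T = max (exp K) ((K - c0) * 2 / s)"
  have T0: "T \<ge> 0" unfolding T_def by (simp add: le_max_iff_disj less_imp_le)
  show "\<exists>R. \<forall>\<Sigma>::real^'n^'n. pd_mat \<Sigma> \<and> (norm \<Sigma> > R \<or> norm (matrix_inv \<Sigma>) > R)
             \<longrightarrow> h_rho S k \<rho> \<Sigma> > M"
  proof (intro exI[of _ "n * T"] allI impI)
    fix \<Sigma> :: "real^'n^'n"
    assume H: "pd_mat \<Sigma> \<and> (norm \<Sigma> > n * T \<or> norm (matrix_inv \<Sigma>) > n * T)"
    have sym: "transpose \<Sigma> = \<Sigma>" and pdq: "\<And>x. x \<noteq> 0 \<Longrightarrow> 0 < x \<bullet> (\<Sigma> *v x)"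
      using H by (auto simp: pd_mat_def)
    obtain v :: "'n \<Rightarrow> real^'n" and d where orth: "\<And>i j. v i \<bullet> v j = (if i = j then 1 else 0)"
      and ev: "\<And>i. \<Sigma> *v v i = d i *\<^sub>R v i"
      using spectral[OF sym] by blast
    have vv: "v i \<bullet> v i = 1" for i using orth[of i i] by simp
    have nv: "norm (v i) = 1" for i using vv norm_eq_1 by blast
    have dpos: "d i > 0" for i
    proof -
      have "v i \<noteq> 0" using vv[of i] by auto
      hence "0 < v i \<bullet> (\<Sigma> *v v i)" by (rule pdq)
      also have "\<dots> = d i" using vv[of i] by (simp add: ev)
      finally show ?thesis .
    qed
    have detS: "det \<Sigma> = (\<Prod>i\<in>UNIV. d i)" by (rule det_basis[OF orth ev])
    have "det \<Sigma> > 0" unfolding detS by (rule prod_pos) (simp add: dpos)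
    hence invS: "invertible \<Sigma>" by (simp add: invertible_det_nz)
    note mi = matrix_inv_props[OF invS]
    have evi: "matrix_inv \<Sigma> *v v i = (1 / d i) *\<^sub>R v i" for i
    proof -
      have "v i = matrix_inv \<Sigma> *v (\<Sigma> *v v i)" by (simp add: matrix_vector_mul_assoc mi(1))
      also have "\<dots> = d i *\<^sub>R (matrix_inv \<Sigma> *v v i)" by (simp add: ev matrix_vector_mult_scaleR)
      finally have "v i = d i *\<^sub>R (matrix_inv \<Sigma> *v v i)" .
      hence "(1 / d i) *\<^sub>R v i = (1 / d i) *\<^sub>R (d i *\<^sub>R (matrix_inv \<Sigma> *v v i))" by simp
      thus ?thesis using dpos[of i] by simp
    qed
    have trterm: "v i \<bullet> ((matrix_inv \<Sigma> ** S) *v v i) = (1 / d i) * (v i \<bullet> (S *v v i))" for i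
    proof -
      define w where "w = S *v v i"
      have vi: "v i = (1 / d i) *\<^sub>R (\<Sigma> *v v i)" using dpos[of i] by (simp add: ev)
      have "v i \<bullet> ((matrix_inv \<Sigma> ** S) *v v i) = v i \<bullet> (matrix_inv \<Sigma> *v w)"
        by (simp add: w_def matrix_vector_mul_assoc)
      also have "\<dots> = (1 / d i) * ((\<Sigma> *v v i) \<bullet> (matrix_inv \<Sigma> *v w))"
        by (subst vi) simp
      also have "(\<Sigma> *v v i) \<bullet> (matrix_inv \<Sigma> *v w) = v i \<bullet> (\<Sigma> *v (matrix_inv \<Sigma> *v w))"
        by (rule sym_inner[OF sym, symmetric])
      also have "\<dots> = v i \<bullet> w" by (simp add: matrix_vector_mul_assoc mi(2))
      finally show ?thesis by (simp add: w_def)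
    qed
    have tr: "trace (matrix_inv \<Sigma> ** S) = (\<Sum>i\<in>UNIV. (1 / d i) * (v i \<bullet> (S *v v i)))"
      using trace_basis[OF orth] trterm by simp
    define g where "g i = ln (d i) + s / d i" for i
    have hge: "h_rho S k \<rho> \<Sigma> \<ge> (\<Sum>i\<in>UNIV. g i)"
    proof -
      have l: "ln (det \<Sigma>) = (\<Sum>i\<in>UNIV. ln (d i))" unfolding detS
        by (rule ln_prod) (auto simp: dpos less_imp_neq[symmetric])
      have "(\<Sum>i\<in>UNIV. s / d i) \<le> (\<Sum>i\<in>UNIV. (1 / d i) * (v i \<bullet> (S *v v i)))"
      proof (rule sum_mono)
        fix i
        have "s \<le> v i \<bullet> (S *v v i)" using sl nv by blast
        hence "s * (1 / d i) \<le> (v i \<bullet> (S *v v i)) * (1 / d i)"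
          using dpos[of i] by (intro mult_right_mono) auto
        thus "s / d i \<le> (1 / d i) * (v i \<bullet> (S *v v i))" by (simp add: mult.commute)
      qed
      moreover have "0 \<le> \<rho> / 2 * (infdist \<Sigma> (sparse_sym_set k))\<^sup>2" using assms(3) by simp
      ultimately show ?thesis
        unfolding h_rho_def g_def l tr sum.distrib by linarith
    qed
    have gc0: "g i \<ge> c0" for i
    proof -
      have "g i \<ge> (s/2)/d i + c0" using g_bounds(2)[OF s0 dpos[of i]] by (simp add: g_def c0_def)
      moreover have "(s/2)/d i \<ge> 0" using s0 dpos[of i] by simp
      ultimately show ?thesis by linarith
    qed
    have big: "\<exists>j. g j > K"
    proof -
      have Kc0: "K - c0 > 0" unfolding K_def n_def
      proof -
        have "real CARD('n) * \<bar>c0\<bar> \<ge> \<bar>c0\<bar>"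
          using mult_right_mono[of 1 "real CARD('n)" "\<bar>c0\<bar>"] by simp
        thus "\<bar>M\<bar> + real CARD('n) * \<bar>c0\<bar> + 1 - c0 > 0" by linarith
      qed
      from H have "norm \<Sigma> > n * T \<or> norm (matrix_inv \<Sigma>) > n * T" by blast
      thus ?thesis
      proof
        assume N: "norm \<Sigma> > n * T"
        have nrm: "(norm \<Sigma>)^2 = (\<Sum>i\<in>UNIV. (d i)^2)"
          using norm_sq_basis[OF orth, of \<Sigma>] by (simp add: ev nv dpos less_imp_le)
        have dnn: "\<And>i. 0 \<le> d i" using dpos less_imp_le by blast
        obtain j where "d j > T" using exists_big[OF nrm dnn T0 N[unfolded n_def]] by blast
        hence "d j > exp K" unfolding T_def by simp
        hence "ln (d j) > K" using ln_less_cancel_iff[of "exp K" "d j"] dpos[of j] by simp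
        moreover have "g j \<ge> ln (d j)" using g_bounds(1)[OF s0 dpos[of j]] by (simp add: g_def)
        ultimately show ?thesis by (intro exI[of _ j]) linarith
      next
        assume N: "norm (matrix_inv \<Sigma>) > n * T"
        have nrm: "(norm (matrix_inv \<Sigma>))^2 = (\<Sum>i\<in>UNIV. (1 / d i)^2)"
          using norm_sq_basis[OF orth, of "matrix_inv \<Sigma>"] by (simp add: evi nv dpos less_imp_le)
        have dnn: "\<And>i. 0 \<le> 1 / d i" using dpos by (simp add: less_imp_le)
        obtain j where "1 / d j > T" using exists_big[OF nrm dnn T0 N[unfolded n_def]] by blast
        hence "1 / d j > (K - c0) * 2 / s" unfolding T_def by simp
        hence "(s/2) * (1 / d j) > (s/2) * ((K - c0) * 2 / s)" using s0 by (intro mult_strict_left_mono) auto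
        hence "(s/2) / d j > K - c0" using s0 by simp
        moreover have "g j \<ge> (s/2)/d j + c0" using g_bounds(2)[OF s0 dpos[of j]] by (simp add: g_def c0_def)
        ultimately show ?thesis by (intro exI[of _ j]) linarith
      qed
    qed
    then obtain j where gj: "g j > K" by blast
    have "(\<Sum>i\<in>UNIV. g i) = g j + (\<Sum>i\<in>UNIV - {j}. g i)"
      by (rule sum.remove) auto
    moreover have "(\<Sum>i\<in>UNIV - {j}. g i) \<ge> - n * \<bar>c0\<bar>"
    proof -
      have "(\<Sum>i\<in>UNIV - {j}. g i) \<ge> (\<Sum>i\<in>UNIV - {j}. c0)" by (rule sum_mono) (rule gc0)
      moreover have "(\<Sum>i\<in>UNIV - {j}. c0) = real (card (UNIV - {j} :: 'n set)) * c0" by simp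
      moreover have "real (card (UNIV - {j} :: 'n set)) * c0 \<ge> - (real (card (UNIV - {j} :: 'n set)) * \<bar>c0\<bar>)"
        using mult_left_mono[of "-\<bar>c0\<bar>" c0 "real (card (UNIV - {j} :: 'n set))"] by simp
      moreover have "real (card (UNIV - {j} :: 'n set)) * \<bar>c0\<bar> \<le> n * \<bar>c0\<bar>"
        unfolding n_def by (intro mult_right_mono) (auto intro: card_mono)
      ultimately show ?thesis by linarith
    qed
    ultimately have "(\<Sum>i\<in>UNIV. g i) > M" using gj unfolding K_def by linarith
    thus "h_rho S k \<rho> \<Sigma> > M" using hge by linarith
  qed
qed

end
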